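(* Let $0<r_1<r_2<r_3$ and let $f:\mathbb T^2\to\mathbb R$, $f(\alpha,\beta)=C(r_1,r_2,r_3,\alpha,\beta)$. Then $(\alpha,\beta)=(\pi,0)$ is a global minimum point of $f$ (i.e. $c(r_1,r_2,r_3)=f(\pi,0)=\frac1{r_1+r_2}+\frac1{r_2+r_3}+\frac1{r_3-r_1}$) if and only if \[ r_2(r_3-r_1)^3 - r_1(r_3+r_2)^3 - r_3(r_1+r_2)^3 \ \ge\ 0. \] Moreover, if this inequality holds, $(\pi,0)$ is the unique global minimum point of $f$ on $\mathbb T^2$.
   Context: For $r_1,r_2,r_3\ge 0$ and $(\alpha,\beta)\in\mathbb T^2=(\mathbb R/2\pi\mathbb Z)^2$ let \[C(r_1,r_2,r_3,\alpha,\beta)=\frac{1}{\sqrt{r_1^2+r_2^2-2r_1r_2\cos\alpha}}+\frac{1}{\sqrt{r_1^2+r_3^2-2r_1r_3\cos\beta}}+\frac{1}{\sqrt{r_2^2+r_3^2-2r_2r_3\cos(\alpha-\beta)}}\] (value $+\infty$ if a denominator vanishes); this is the Coulomb cost of $v_1=(r_1,0)$, $v_2=r_2(\cos\alpha,\sin\alpha)$, $v_3=r_3(\cos\beta,\sin\beta)$ in $\mathbb R^2$. The radial cost is $c(r_1,r_2,r_3)=\min_{(\alpha,\beta)\in\mathbb T^2}C(r_1,r_2,r_3,\alpha,\beta)$. *)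

theory Defs
  imports Complex_Main
begin

text \<open>Coulomb cost of v1 = (r1,0), v2 = r2(cos a, sin a), v3 = r3(cos b, sin b).
  Angles are real numbers representing points of the torus (R/2 pi Z)^2; the cost is
  2 pi-periodic in each angle. (For pairwise distinct positive radii no denominator vanishes.)\<close>
definition coulomb_cost :: "real \<Rightarrow> real \<Rightarrow> real \<Rightarrow> real \<Rightarrow> real \<Rightarrow> real" where
  "coulomb_cost r1 r2 r3 a b =
     1 / sqrt (r1\<^sup>2 + r2\<^sup>2 - 2 * r1 * r2 * cos a)
   + 1 / sqrt (r1\<^sup>2 + r3\<^sup>2 - 2 * r1 * r3 * cos b)
   + 1 / sqrt (r2\<^sup>2 + r3\<^sup>2 - 2 * r2 * r3 * cos (a - b))"

end

theory Submission imports Defs begin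

lemma key_id:
  fixes u v :: real assumes "u > 0" "v > 0"
  shows "1/u - (1/v - (u^2-v^2)/(2*v^2*v)) = (u-v)^2*(u+2*v)/(2*u*v^3)"
proof -
  have "(1/u - (1/v - (u^2-v^2)/(2*v^2*v))) * (2*u*v^3) = (u-v)^2*(u+2*v)"
    using assms by (simp add: field_simps power2_eq_square power3_eq_cube)
  then show ?thesis using assms by (simp add: eq_divide_eq)
qed

lemma inv_lower:
  fixes u v :: real assumes "u > 0" "v > 0"
  shows "1/v - (u^2-v^2)/(2*v^2*v) \<le> 1/u"
  and "u \<noteq> v \<Longrightarrow> 1/v - (u^2-v^2)/(2*v^2*v) < 1/u"
proof -
  have "0 \<le> (u-v)^2*(u+2*v)/(2*u*v^3)" using assms by simp
  then show "1/v - (u^2-v^2)/(2*v^2*v) \<le> 1/u" using key_id[OF assms] by linarith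
next
  assume "u \<noteq> v"
  then have "0 < (u-v)^2*(u+2*v)/(2*u*v^3)" using assms by simp
  then show "1/v - (u^2-v^2)/(2*v^2*v) < 1/u" using key_id[OF assms] by linarith
qed

lemma inv_upper:
  fixes u v m :: real assumes "u \<ge> m" "m > 0" "v > 0"
  shows "1/u \<le> 1/v - (u^2-v^2)/(2*v^2*v) + (u^2-v^2)^2 * (1/(2*v^5) + 1/(m*v^4))"
proof -
  have u: "u > 0" using assms by linarith
  have e1: "(u-v)^2 = (u^2-v^2)^2/(u+v)^2"
  proof -
    have "u^2-v^2 = (u-v)*(u+v)" by (simp add: power2_eq_square algebra_simps)
    then show ?thesis using u assms by (simp add: power_mult_distrib)
  qed
  have e2: "(u-v)^2 \<le> (u^2-v^2)^2/v^2" unfolding e1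
    by (rule divide_left_mono) (use u assms in \<open>auto intro: power_mono\<close>)
  have e3: "(u+2*v)/(2*u*v^3) = 1/(2*v^3) + 1/(u*v^2)" using u assms by (simp add: field_simps power2_eq_square power3_eq_cube)
  have e4: "1/(u*v^2) \<le> 1/(m*v^2)" using u assms by (intro divide_left_mono mult_right_mono) auto
  have "(u-v)^2*(u+2*v)/(2*u*v^3) = (u-v)^2 * ((u+2*v)/(2*u*v^3))" by simp
  also have "\<dots> \<le> (u^2-v^2)^2/v^2 * (1/(2*v^3) + 1/(m*v^2))"
    unfolding e3 using e2 e4 u assms by (intro mult_mono) auto
  also have "\<dots> = (u^2-v^2)^2 * (1/(2*v^5) + 1/(m*v^4))" using assms by (simp add: field_simps eval_nat_numeral)
  finally show ?thesis using key_id[OF u assms(3)] by linarith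
qed

lemma cs_ineq:
  fixes p q k c1 c3 :: real
  assumes "c1 > 0" "c3 > 0" "k \<ge> 0" "k*(c1+c3) \<le> c1*c3"
  shows "k*(p+q)^2 \<le> c1*p^2 + c3*q^2"
proof -
  have "k*c1*c3*(p+q)^2 \<le> k*(c1+c3)*(c1*p^2+c3*q^2)"
  proof -
    have "k*(c1+c3)*(c1*p^2+c3*q^2) - k*c1*c3*(p+q)^2 = k*(c1*p - c3*q)^2"
      by (simp add: power2_eq_square algebra_simps)
    moreover have "0 \<le> k*(c1*p - c3*q)^2" using assms by simp
    ultimately show ?thesis by linarith
  qed
  also have "\<dots> \<le> c1*c3*(c1*p^2+c3*q^2)"
    using assms by (intro mult_right_mono) (auto intro!: add_nonneg_nonneg mult_nonneg_nonneg)
  finally have "c1*c3*(k*(p+q)^2) \<le> c1*c3*(c1*p^2+c3*q^2)" by (simp add: algebra_simps)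
  then show ?thesis using assms by (simp add: mult_le_cancel_left_pos)
qed

lemma trig_ineq:
  fixes c1 c3 k a b :: real
  assumes "c1 > 0" "c3 > 0" "k \<ge> 0" "k*(c1+c3) \<le> c1*c3"
  shows "k*(1 - cos b) \<le> c1*(1+cos a) + c3*(1+cos(a-b))"
proof -
  define x where "x = a/2"
  define y where "y = (a-b)/2"
  have a: "a = 2*x" and ab: "a - b = 2*y" and b: "b = 2*(x-y)" unfolding x_def y_def by (simp_all add: field_simps)
  have h1: "1 + cos a = 2*(cos x)^2" unfolding a cos_double_cos by simp
  have h3: "1 + cos (a-b) = 2*(cos y)^2" unfolding ab cos_double_cos by simp
  have h2: "1 - cos b = 2*(sin (x-y))^2" unfolding b cos_double_sin by simp
  have s: "\<bar>sin (x-y)\<bar> \<le> \<bar>cos x\<bar> + \<bar>cos y\<bar>"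
  proof -
    have "\<bar>sin (x-y)\<bar> = \<bar>sin x * cos y - cos x * sin y\<bar>" by (simp add: sin_diff)
    also have "\<dots> \<le> \<bar>sin x\<bar> * \<bar>cos y\<bar> + \<bar>cos x\<bar> * \<bar>sin y\<bar>" by (metis abs_mult abs_triangle_ineq4)
    also have "\<dots> \<le> 1 * \<bar>cos y\<bar> + \<bar>cos x\<bar> * 1"
      by (intro add_mono mult_right_mono mult_left_mono) auto
    finally show ?thesis by simp
  qed
  have "(sin (x-y))^2 \<le> (\<bar>cos x\<bar> + \<bar>cos y\<bar>)^2"
    using s by (metis abs_ge_zero power2_abs power_mono)
  then have "k*(sin (x-y))^2 \<le> k*(\<bar>cos x\<bar> + \<bar>cos y\<bar>)^2" using assms(3) by (rule mult_left_mono)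
  also have "\<dots> \<le> c1*\<bar>cos x\<bar>^2 + c3*\<bar>cos y\<bar>^2" by (rule cs_ineq[OF assms])
  finally show ?thesis unfolding h1 h2 h3 by simp
qed

lemma inv_sqrt_lower:
  fixes X v :: real assumes "X > 0" "v > 0"
  shows "1/v - (X-v^2)/(2*v^2*v) \<le> 1/sqrt X"
  and "X \<noteq> v^2 \<Longrightarrow> 1/v - (X-v^2)/(2*v^2*v) < 1/sqrt X"
proof -
  have u: "sqrt X > 0" "(sqrt X)^2 = X" using assms by auto
  show "1/v - (X-v^2)/(2*v^2*v) \<le> 1/sqrt X" using inv_lower(1)[OF u(1) assms(2)] u by simp
  assume "X \<noteq> v^2"
  then have "sqrt X \<noteq> v" using u by auto
  then show "1/v - (X-v^2)/(2*v^2*v) < 1/sqrt X" using inv_lower(2)[OF u(1) assms(2)] u by simp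
qed

lemma inv_sqrt_upper:
  fixes X v m :: real assumes "X \<ge> m^2" "m > 0" "v > 0"
  shows "1/sqrt X \<le> 1/v - (X-v^2)/(2*v^2*v) + (X-v^2)^2 * (1/(2*v^5) + 1/(m*v^4))"
proof -
  have "sqrt X \<ge> m" using assms real_le_rsqrt by blast
  moreover have "(sqrt X)^2 = X" using assms by (meson order.trans real_sqrt_pow2 zero_le_power2)
  ultimately show ?thesis using inv_upper[of m "sqrt X" v] assms by simp
qed

lemma cost_alt:
  "coulomb_cost r1 r2 r3 a b =
     1 / sqrt ((r1+r2)^2 - 2*r1*r2*(1 + cos a))
   + 1 / sqrt ((r3-r1)^2 + 2*r1*r3*(1 - cos b))
   + 1 / sqrt ((r2+r3)^2 - 2*r2*r3*(1 + cos (a - b)))"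
  unfolding coulomb_cost_def by (simp add: power2_eq_square algebra_simps)

lemma cost_pi0:
  assumes "0 < r1" "r1 < r2" "r2 < r3"
  shows "coulomb_cost r1 r2 r3 pi 0 = 1/(r1+r2) + 1/(r3-r1) + 1/(r2+r3)"
  unfolding cost_alt using assms by simp


lemma gen_e:
  fixes v w z :: real assumes "v \<noteq> 0"
  shows "1/v - ((v^2 + w*z) - v^2)/(2*v^2*v) = 1/v - w/(2*v^3) * z"
  using assms by (simp add: field_simps power2_eq_square power3_eq_cube)

lemma coef_ineq:
  fixes r1 r2 r3 :: real
  assumes "0 < r1" "r1 < r2" "r2 < r3"
  defines "c1 \<equiv> r1*r2/(r1+r2)^3" and "c3 \<equiv> r2*r3/(r2+r3)^3" and "k \<equiv> r1*r3/(r3-r1)^3"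
  shows "c1*c3 - k*(c1+c3) = (r2 * (r3 - r1) ^ 3 - r1 * (r3 + r2) ^ 3 - r3 * (r1 + r2) ^ 3) * (r1*r2*r3) / ((r1+r2)^3*(r3-r1)^3*(r2+r3)^3)"
proof -
  have "(r1+r2) \<noteq> 0" "r3 - r1 \<noteq> 0" "r2+r3 \<noteq> 0" using assms by auto
  then show ?thesis unfolding c1_def c3_def k_def by (simp add: field_simps)
qed

lemma part1:
  fixes r1 r2 r3 a b :: real
  assumes "0 < r1" "r1 < r2" "r2 < r3"
    and D: "r2 * (r3 - r1) ^ 3 - r1 * (r3 + r2) ^ 3 - r3 * (r1 + r2) ^ 3 \<ge> 0"
  shows "coulomb_cost r1 r2 r3 pi 0 \<le> coulomb_cost r1 r2 r3 a b"
    and "coulomb_cost r1 r2 r3 a b \<le> coulomb_cost r1 r2 r3 pi 0 \<Longrightarrow> cos a = -1 \<and> cos (a-b) = -1"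
proof -
  define c1 where "c1 = r1*r2/(r1+r2)^3"
  define c3 where "c3 = r2*r3/(r2+r3)^3"
  define k where "k = r1*r3/(r3-r1)^3"
  have pos: "c1 > 0" "c3 > 0" "k \<ge> 0" using assms unfolding c1_def c3_def k_def by auto
  have "c1*c3 - k*(c1+c3) \<ge> 0"
    unfolding c1_def c3_def k_def coef_ineq[OF assms(1-3)] using assms D by simp
  then have kk: "k*(c1+c3) \<le> c1*c3" by simp
  have T: "k*(1 - cos b) \<le> c1*(1+cos a) + c3*(1+cos(a-b))" by (rule trig_ineq[OF pos kk])
  define X1 where "X1 = (r1+r2)^2 - 2*r1*r2*(1 + cos a)"
  define X2 where "X2 = (r3-r1)^2 + 2*r1*r3*(1 - cos b)"
  define X3 where "X3 = (r2+r3)^2 - 2*r2*r3*(1 + cos (a - b))"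
  have X1p: "X1 > 0"
  proof -
    have "X1 = (r2-r1)^2 + 2*r1*r2*(1 - cos a)" unfolding X1_def by (simp add: power2_eq_square algebra_simps)
    moreover have "2*r1*r2*(1 - cos a) \<ge> 0" using assms by simp
    moreover have "(r2-r1)^2 > 0" using assms by simp
    ultimately show ?thesis by linarith
  qed
  have X2p: "X2 > 0"
  proof -
    have "2*r1*r3*(1 - cos b) \<ge> 0" using assms by simp
    moreover have "(r3-r1)^2 > 0" using assms by simp
    ultimately show ?thesis unfolding X2_def by linarith
  qed
  have X3p: "X3 > 0"
  proof -
    have "X3 = (r3-r2)^2 + 2*r2*r3*(1 - cos (a-b))" unfolding X3_def by (simp add: power2_eq_square algebra_simps)
    moreover have "2*r2*r3*(1 - cos (a-b)) \<ge> 0" using assms by simp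
    moreover have "(r3-r2)^2 > 0" using assms by simp
    ultimately show ?thesis by linarith
  qed
  have v: "r1+r2 > 0" "r3-r1 > 0" "r2+r3 > 0" using assms by auto
  have X1e: "X1 = (r1+r2)^2 + (-2*r1*r2)*(1 + cos a)" unfolding X1_def by simp
  have X2e: "X2 = (r3-r1)^2 + (2*r1*r3)*(1 - cos b)" unfolding X2_def by simp
  have X3e: "X3 = (r2+r3)^2 + (-2*r2*r3)*(1 + cos (a-b))" unfolding X3_def by simp
  have e1: "1/(r1+r2) - (X1-(r1+r2)^2)/(2*(r1+r2)^2*(r1+r2)) = 1/(r1+r2) + c1*(1+cos a)"
    unfolding X1e gen_e[OF v(1)[THEN less_imp_neq, symmetric]] c1_def by simp
  have e2: "1/(r3-r1) - (X2-(r3-r1)^2)/(2*(r3-r1)^2*(r3-r1)) = 1/(r3-r1) - k*(1-cos b)"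
    unfolding X2e gen_e[OF v(2)[THEN less_imp_neq, symmetric]] k_def by simp
  have e3: "1/(r2+r3) - (X3-(r2+r3)^2)/(2*(r2+r3)^2*(r2+r3)) = 1/(r2+r3) + c3*(1+cos (a-b))"
    unfolding X3e gen_e[OF v(3)[THEN less_imp_neq, symmetric]] c3_def by simp
  have L1: "1/(r1+r2) + c1*(1+cos a) \<le> 1/sqrt X1" using inv_sqrt_lower(1)[OF X1p v(1)] e1 by simp
  have L2: "1/(r3-r1) - k*(1-cos b) \<le> 1/sqrt X2" using inv_sqrt_lower(1)[OF X2p v(2)] e2 by simp
  have L3: "1/(r2+r3) + c3*(1+cos (a-b)) \<le> 1/sqrt X3" using inv_sqrt_lower(1)[OF X3p v(3)] e3 by simp
  have C: "coulomb_cost r1 r2 r3 a b = 1/sqrt X1 + 1/sqrt X2 + 1/sqrt X3"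
    unfolding cost_alt X1_def X2_def X3_def ..
  have C0: "coulomb_cost r1 r2 r3 pi 0 = 1/(r1+r2) + 1/(r3-r1) + 1/(r2+r3)" by (rule cost_pi0[OF assms(1-3)])
  show "coulomb_cost r1 r2 r3 pi 0 \<le> coulomb_cost r1 r2 r3 a b"
    unfolding C C0 using L1 L2 L3 T by linarith
  assume le: "coulomb_cost r1 r2 r3 a b \<le> coulomb_cost r1 r2 r3 pi 0"
  show "cos a = -1 \<and> cos (a-b) = -1"
  proof (rule ccontr)
    assume "\<not> (cos a = -1 \<and> cos (a-b) = -1)"
    then have "X1 \<noteq> (r1+r2)^2 \<or> X3 \<noteq> (r2+r3)^2"
      unfolding X1_def X3_def using assms by auto
    then have "1/(r1+r2) + c1*(1+cos a) < 1/sqrt X1 \<or> 1/(r2+r3) + c3*(1+cos (a-b)) < 1/sqrt X3"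
      using inv_sqrt_lower(2)[OF X1p v(1)] inv_sqrt_lower(2)[OF X3p v(3)] e1 e3 by auto
    then show False using le unfolding C C0 using L1 L2 L3 T by linarith
  qed
qed

lemma sqrt_ge_self: fixes w :: real assumes "0 \<le> w" "w \<le> 1" shows "w \<le> sqrt w"
proof -
  have "w^2 \<le> w" using assms by (simp add: power2_eq_square mult_left_le)
  then show ?thesis by (rule real_le_rsqrt)
qed

lemma upper_term:
  fixes X v m w P t M :: real
  assumes "X \<ge> m^2" "m > 0" "v > 0" "X = v^2 + w*P" "P^2 \<le> 4*t^2"
    "M = 1/(2*v^5) + 1/(m*v^4)"
  shows "1/sqrt X \<le> 1/v - w/(2*v^3) * P + 4*M*w^2*t^2"
proof -
  have M: "M \<ge> 0" using assms by simp
  have "1/sqrt X \<le> 1/v - (X-v^2)/(2*v^2*v) + (X-v^2)^2 * M"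
    using inv_sqrt_upper[OF assms(1-3)] assms(6) by simp
  also have "(X-v^2)/(2*v^2*v) = w/(2*v^3) * P" using assms by (simp add: power2_eq_square power3_eq_cube)
  also have "(X-v^2)^2 * M = w^2 * P^2 * M" using assms by (simp add: power_mult_distrib)
  also have "w^2 * P^2 * M \<le> w^2 * (4*t^2) * M" using assms M by (intro mult_right_mono mult_left_mono) auto
  finally show ?thesis by (simp add: algebra_simps)
qed

lemma part2:
  fixes r1 r2 r3 :: real
  assumes "0 < r1" "r1 < r2" "r2 < r3"
    and D: "r2 * (r3 - r1) ^ 3 - r1 * (r3 + r2) ^ 3 - r3 * (r1 + r2) ^ 3 < 0"
  shows "\<exists>a b. coulomb_cost r1 r2 r3 a b < coulomb_cost r1 r2 r3 pi 0"
proof -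
  define c1 where "c1 = r1*r2/(r1+r2)^3"
  define c3 where "c3 = r2*r3/(r2+r3)^3"
  define k where "k = r1*r3/(r3-r1)^3"
  have v: "r1+r2 > 0" "r3-r1 > 0" "r2+r3 > 0" using assms by auto
  have pos: "c1 > 0" "c3 > 0" "k > 0" using assms unfolding c1_def c3_def k_def by auto
  have "c1*c3 - k*(c1+c3) < 0"
    unfolding c1_def c3_def k_def coef_ineq[OF assms(1-3)] using assms D v
    by (intro divide_neg_pos mult_neg_pos) auto
  then have kk: "c1*c3 < k*(c1+c3)" by simp
  define lam where "lam = c3/(c1+c3)"
  define mu where "mu = c1/(c1+c3)"
  have lm: "lam + mu = 1" "0 < lam" "lam < 1" "0 < mu" "mu < 1"
  proof -
    have cp: "c1 + c3 > 0" using pos by simp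
    have "lam + mu = (c3 + c1)/(c1+c3)" unfolding lam_def mu_def by (simp add: add_divide_distrib)
    then show "lam + mu = 1" using cp by simp
    show "0 < lam" "0 < mu" unfolding lam_def mu_def using pos cp by auto
    show "lam < 1" "mu < 1" unfolding lam_def mu_def using pos cp by auto
  qed
  define Q where "Q = c1*lam^2 + c3*mu^2 - k"
  have "Q = (c1*c3 - k*(c1+c3))/(c1+c3)"
  proof -
    have cp: "c1 + c3 \<noteq> 0" using pos by simp
    have "c1*lam^2 + c3*mu^2 = (c1*c3*(c1+c3))/(c1+c3)^2"
      unfolding lam_def mu_def by (simp add: power_divide add_divide_distrib power2_eq_square algebra_simps)
    also have "\<dots> = c1*c3/(c1+c3)" using cp by (simp add: power2_eq_square)
    finally have "Q = c1*c3/(c1+c3) - k" unfolding Q_def by simp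
    also have "\<dots> = (c1*c3 - k*(c1+c3))/(c1+c3)" using cp by (simp add: diff_divide_distrib)
    finally show ?thesis .
  qed
  then have Qn: "Q < 0" using kk pos by (simp add: divide_neg_pos)
  define M1 where "M1 = 1/(2*(r1+r2)^5) + 1/((r2-r1)*(r1+r2)^4)"
  define M2 where "M2 = 1/(2*(r3-r1)^5) + 1/((r3-r1)*(r3-r1)^4)"
  define M3 where "M3 = 1/(2*(r2+r3)^5) + 1/((r3-r2)*(r2+r3)^4)"
  define E where "E = 4*M1*(-2*r1*r2)^2 + 4*M2*(2*r1*r3)^2 + 4*M3*(-2*r2*r3)^2"
  have E0: "E \<ge> 0" unfolding E_def M1_def M2_def M3_def using assms by simp
  have K: "4*k + E > 0" using E0 pos by simp
  define t where "t = min (1/4) (-Q/(4*k+E))"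
  have t0: "t > 0" unfolding t_def using Qn K by (simp add: divide_neg_pos)
  have t1: "t \<le> 1/4" unfolding t_def by (rule min.cobounded1)
  have t2: "(4*k+E)*t \<le> -Q"
  proof -
    have "t \<le> -Q/(4*k+E)" unfolding t_def by (rule min.cobounded2)
    then have "(4*k+E)*t \<le> (4*k+E)*(-Q/(4*k+E))" using K by (intro mult_left_mono) auto
    then show ?thesis using K by simp
  qed
  define s where "s = sqrt t"
  have s: "s > 0" "s^2 = t" "s \<le> 1" unfolding s_def using t0 t1 by (auto simp: real_sqrt_le_1_iff)
  have ls: "0 \<le> lam*s" "lam*s \<le> 1" "0 \<le> mu*s" "mu*s \<le> 1" using lm s
    by (auto intro: mult_le_one)
  define x where "x = arcsin (lam*s)"
  define y where "y = arcsin (mu*s)"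
  have sx: "sin x = lam*s" "cos x = sqrt (1 - (lam*s)^2)" unfolding x_def using ls
    by (auto simp: cos_arcsin)
  have sy: "sin y = mu*s" "cos y = sqrt (1 - (mu*s)^2)" unfolding y_def using ls
    by (auto simp: cos_arcsin)
  have cxb: "1 - t \<le> cos x" "cos x \<le> 1"
  proof -
    have "lam^2 \<le> 1" "0 \<le> lam^2" using lm by (auto simp: power_le_one)
    then have a1: "(lam*s)^2 \<le> t" using s t0 by (simp add: power_mult_distrib mult_left_le_one_le)
    have a2: "0 \<le> (lam*s)^2" "(lam*s)^2 \<le> 1" using ls by (auto simp: power_le_one)
    have "1 - (lam*s)^2 \<le> cos x" unfolding sx(2) by (rule sqrt_ge_self) (use a2 in auto)
    then show "1 - t \<le> cos x" using a1 by linarith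
  qed simp
  have cyb: "1 - t \<le> cos y" "cos y \<le> 1"
  proof -
    have "mu^2 \<le> 1" "0 \<le> mu^2" using lm by (auto simp: power_le_one)
    then have a1: "(mu*s)^2 \<le> t" using s t0 by (simp add: power_mult_distrib mult_left_le_one_le)
    have a2: "0 \<le> (mu*s)^2" "(mu*s)^2 \<le> 1" using ls by (auto simp: power_le_one)
    have "1 - (mu*s)^2 \<le> cos y" unfolding sy(2) by (rule sqrt_ge_self) (use a2 in auto)
    then show "1 - t \<le> cos y" using a1 by linarith
  qed simp
  have sxy: "s*(1-t) \<le> sin (x+y)" "sin (x+y) \<le> s"
  proof -
    have e: "sin (x+y) = lam*s*cos y + mu*s*cos x" using sx sy by (simp add: sin_add algebra_simps)
    have "lam*s*cos y \<ge> lam*s*(1-t)" "mu*s*cos x \<ge> mu*s*(1-t)"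
      using ls cxb cyb by (auto intro: mult_left_mono)
    then show "s*(1-t) \<le> sin (x+y)" unfolding e using lm
      by (metis add_mono distrib_right mult.commute mult.left_commute mult_1)
    have "lam*s*cos y \<le> lam*s" "mu*s*cos x \<le> mu*s"
      using ls cxb cyb by (auto intro: mult_left_le)
    then show "sin (x+y) \<le> s" unfolding e using lm
      by (metis add_mono distrib_right mult_1)
  qed
  define a where "a = pi + 2*x"
  define b where "b = 2*x + 2*y"
  define P where "P = 1 + cos a"
  define W where "W = 1 + cos (a - b)"
  define R where "R = 1 - cos b"
  have Pe: "P = 2*lam^2*t"
    unfolding P_def a_def using sx s by (simp add: cos_add cos_double_sin power_mult_distrib)
  have We: "W = 2*mu^2*t"
  proof -
    have "a - b = pi + 2*(-y)" unfolding a_def b_def by simp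
    then show ?thesis unfolding W_def using sy s
      by (simp add: cos_add cos_double_sin power_mult_distrib)
  qed
  have Re: "R = 2*(sin (x+y))^2"
  proof -
    have "b = 2*(x+y)" unfolding b_def by simp
    then show ?thesis unfolding R_def using cos_double_sin[of "x+y"] by simp
  qed
  have R1: "R \<ge> 2*t*(1 - 2*t)"
  proof -
    have "0 \<le> s*(1-t)" using s t1 by simp
    then have "(s*(1-t))^2 \<le> (sin (x+y))^2" using sxy(1) by (intro power_mono) auto
    moreover have "(s*(1-t))^2 = t*(1-t)^2" using s by (simp add: power_mult_distrib)
    moreover have "t*(1-t)^2 \<ge> t*(1-2*t)" using t0 by (intro mult_left_mono) (auto simp: power2_eq_square algebra_simps)
    ultimately show ?thesis unfolding Re by linarith
  qed
  have R2: "R \<le> 2*t"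
  proof -
    have "0 \<le> s*(1-t)" using s t1 by simp
    then have "0 \<le> sin (x+y)" using sxy(1) by linarith
    then have "(sin (x+y))^2 \<le> s^2" using sxy by (intro power_mono) auto
    then show ?thesis unfolding Re using s by simp
  qed
  have Psq: "P^2 \<le> 4*t^2"
  proof -
    have "lam^2 \<le> 1" using lm by (simp add: power_le_one)
    then have "0 \<le> P" "P \<le> 2*t" unfolding Pe using t0 by (auto simp: mult_le_cancel_right1)
    then have "P^2 \<le> (2*t)^2" by (intro power_mono) auto
    then show ?thesis by (simp add: power_mult_distrib)
  qed
  have Wsq: "W^2 \<le> 4*t^2"
  proof -
    have "mu^2 \<le> 1" using lm by (simp add: power_le_one)
    then have "0 \<le> W" "W \<le> 2*t" unfolding We using t0 by (auto simp: mult_le_cancel_right1)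
    then have "W^2 \<le> (2*t)^2" by (intro power_mono) auto
    then show ?thesis by (simp add: power_mult_distrib)
  qed
  have Rsq: "R^2 \<le> 4*t^2"
  proof -
    have "0 \<le> R" unfolding R_def by simp
    then have "R^2 \<le> (2*t)^2" using R2 by (intro power_mono) auto
    then show ?thesis by (simp add: power_mult_distrib)
  qed
  define X1 where "X1 = (r1+r2)^2 - 2*r1*r2*(1 + cos a)"
  define X2 where "X2 = (r3-r1)^2 + 2*r1*r3*(1 - cos b)"
  define X3 where "X3 = (r2+r3)^2 - 2*r2*r3*(1 + cos (a - b))"
  have X1m: "X1 \<ge> (r2-r1)^2"
  proof -
    have "X1 = (r2-r1)^2 + 2*r1*r2*(1 - cos a)" unfolding X1_def by (simp add: power2_eq_square algebra_simps)
    moreover have "2*r1*r2*(1 - cos a) \<ge> 0" using assms by simp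
    ultimately show ?thesis by linarith
  qed
  have X2m: "X2 \<ge> (r3-r1)^2"
  proof -
    have "2*r1*r3*(1 - cos b) \<ge> 0" using assms by simp
    then show ?thesis unfolding X2_def by linarith
  qed
  have X3m: "X3 \<ge> (r3-r2)^2"
  proof -
    have "X3 = (r3-r2)^2 + 2*r2*r3*(1 - cos (a-b))" unfolding X3_def by (simp add: power2_eq_square algebra_simps)
    moreover have "2*r2*r3*(1 - cos (a-b)) \<ge> 0" using assms by simp
    ultimately show ?thesis by linarith
  qed
  have m: "r2 - r1 > 0" "r3 - r1 > 0" "r3 - r2 > 0" using assms by auto
  have X1e: "X1 = (r1+r2)^2 + (-2*r1*r2)*P" unfolding X1_def P_def by simp
  have X2e: "X2 = (r3-r1)^2 + (2*r1*r3)*R" unfolding X2_def R_def by simp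
  have X3e: "X3 = (r2+r3)^2 + (-2*r2*r3)*W" unfolding X3_def W_def by simp
  have M2e: "M2 = 1/(2*(r3-r1)^5) + 1/((r3-r1)*(r3-r1)^4)" by (rule M2_def)
  have U1: "1/sqrt X1 \<le> 1/(r1+r2) - (-2*r1*r2)/(2*(r1+r2)^3) * P + 4*M1*(-2*r1*r2)^2*t^2"
    by (rule upper_term[OF X1m m(1) v(1) X1e Psq M1_def])
  have U2: "1/sqrt X2 \<le> 1/(r3-r1) - (2*r1*r3)/(2*(r3-r1)^3) * R + 4*M2*(2*r1*r3)^2*t^2"
    by (rule upper_term[OF X2m m(2) v(2) X2e Rsq M2e])
  have U3: "1/sqrt X3 \<le> 1/(r2+r3) - (-2*r2*r3)/(2*(r2+r3)^3) * W + 4*M3*(-2*r2*r3)^2*t^2"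
    by (rule upper_term[OF X3m m(3) v(3) X3e Wsq M3_def])
  have C: "coulomb_cost r1 r2 r3 a b = 1/sqrt X1 + 1/sqrt X2 + 1/sqrt X3"
    unfolding cost_alt X1_def X2_def X3_def ..
  have C0: "coulomb_cost r1 r2 r3 pi 0 = 1/(r1+r2) + 1/(r3-r1) + 1/(r2+r3)" by (rule cost_pi0[OF assms(1-3)])
  have c1e: "(-2*r1*r2)/(2*(r1+r2)^3) = -c1" unfolding c1_def by simp
  have c3e: "(-2*r2*r3)/(2*(r2+r3)^3) = -c3" unfolding c3_def by simp
  have ke: "(2*r1*r3)/(2*(r3-r1)^3) = k" unfolding k_def by simp
  define T1 where "T1 = 4*M1*(-2*r1*r2)^2*t^2"
  define T2 where "T2 = 4*M2*(2*r1*r3)^2*t^2"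
  define T3 where "T3 = 4*M3*(-2*r2*r3)^2*t^2"
  have Ee: "E*t^2 = T1 + T2 + T3" unfolding E_def T1_def T2_def T3_def by (simp add: algebra_simps)
  have U1': "1/sqrt X1 \<le> 1/(r1+r2) + c1*P + T1" using U1 unfolding c1e T1_def by simp
  have U2': "1/sqrt X2 \<le> 1/(r3-r1) - k*R + T2" using U2 unfolding ke T2_def by simp
  have U3': "1/sqrt X3 \<le> 1/(r2+r3) + c3*W + T3" using U3 unfolding c3e T3_def by simp
  have "coulomb_cost r1 r2 r3 a b - coulomb_cost r1 r2 r3 pi 0 \<le> c1*P + c3*W - k*R + E*t^2"
    unfolding C C0 Ee using U1' U2' U3' by linarith
  also have "c1*P + c3*W - k*R \<le> c1*P + c3*W - k*(2*t*(1 - 2*t))"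
    using R1 pos by (simp add: mult_left_mono)
  also have "c1*P + c3*W - k*(2*t*(1 - 2*t)) + E*t^2 = t*(2*Q + (4*k+E)*t)"
    unfolding Pe We Q_def by (simp add: power2_eq_square algebra_simps)
  also have "t*(2*Q + (4*k+E)*t) \<le> t*Q" using t2 t0 by (intro mult_left_mono) auto
  also have "t*Q < 0" using t0 Qn by (simp add: mult_pos_neg)
  finally show ?thesis by auto
qed

lemma cos_m1: fixes z :: real assumes "cos z = -1" shows "\<exists>n::int. z = pi + 2*pi*of_int n"
proof -
  have "cos (z - pi) = 1" using assms by (simp add: cos_diff)
  then have "\<exists>n::int. z - pi = of_int n * 2 * pi" using cos_one_2pi_int[of "z - pi"] by blast
  then obtain n::int where "z - pi = of_int n * 2 * pi" by blast
  then show ?thesis by (intro exI[of _ n]) (simp add: algebra_simps)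
qed

theorem theorem1p3:
  fixes r1 r2 r3 :: real
  assumes "0 < r1" and "r1 < r2" and "r2 < r3"
  shows "((\<forall>a b. coulomb_cost r1 r2 r3 pi 0 \<le> coulomb_cost r1 r2 r3 a b)
           \<longleftrightarrow> r2 * (r3 - r1) ^ 3 - r1 * (r3 + r2) ^ 3 - r3 * (r1 + r2) ^ 3 \<ge> 0)
       \<and> (r2 * (r3 - r1) ^ 3 - r1 * (r3 + r2) ^ 3 - r3 * (r1 + r2) ^ 3 \<ge> 0 \<longrightarrow>
           (\<forall>a b. coulomb_cost r1 r2 r3 a b \<le> coulomb_cost r1 r2 r3 pi 0 \<longrightarrow>
              (\<exists>k::int. a = pi + 2 * pi * of_int k) \<and> (\<exists>m::int. b = 2 * pi * of_int m)))"
proof (intro conjI iffI impI allI)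
  assume H: "\<forall>a b. coulomb_cost r1 r2 r3 pi 0 \<le> coulomb_cost r1 r2 r3 a b"
  show "r2 * (r3 - r1) ^ 3 - r1 * (r3 + r2) ^ 3 - r3 * (r1 + r2) ^ 3 \<ge> 0"
  proof (rule ccontr)
    assume "\<not> ?thesis"
    then obtain a b where "coulomb_cost r1 r2 r3 a b < coulomb_cost r1 r2 r3 pi 0"
      using part2[OF assms] by force
    then show False using H by (meson not_le)
  qed
next
  fix a b
  assume "r2 * (r3 - r1) ^ 3 - r1 * (r3 + r2) ^ 3 - r3 * (r1 + r2) ^ 3 \<ge> 0"
  then show "coulomb_cost r1 r2 r3 pi 0 \<le> coulomb_cost r1 r2 r3 a b" by (rule part1(1)[OF assms])
next
  fix a b
  assume D: "r2 * (r3 - r1) ^ 3 - r1 * (r3 + r2) ^ 3 - r3 * (r1 + r2) ^ 3 \<ge> 0"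
    and le: "coulomb_cost r1 r2 r3 a b \<le> coulomb_cost r1 r2 r3 pi 0"
  have c: "cos a = -1" "cos (a-b) = -1" using part1(2)[OF assms D le] by auto
  obtain n::int where n: "a = pi + 2*pi*of_int n" using cos_m1[OF c(1)] by blast
  obtain m::int where m: "a - b = pi + 2*pi*of_int m" using cos_m1[OF c(2)] by blast
  show "\<exists>k::int. a = pi + 2 * pi * of_int k" using n by blast
  have "b = 2*pi*of_int (n - m)" using n m by (simp add: algebra_simps)
  then show "\<exists>m::int. b = 2 * pi * of_int m" by blast
qed

end
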